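(* In the discrete setting described in the context, let $x_1,\dots,x_k\in\mathrm{dom}\,\partial l$ be arbitrary, and for each $i\ge1$ let $u_i\in\partial f(x_i)=\nabla g(x_i)+\partial l(x_i)$ and $$E_i:=A_i\Bigl\langle u_i,\;x_i-\frac{a_i}{A_i}z_i-\frac{A_{i-1}}{A_i}x_{i-1}\Bigr\rangle-\frac{\gamma}{q}\|z_i-z_{i-1}\|^q.$$ Then for all $k\ge1$, $$A_kf(x_k)-\psi_k(z_k)\le\sum_{i=1}^kE_i.$$
   Context: $\|\cdot\|$ is a norm on $\mathbb{R}^d$. A function $\varphi:\mathbb{R}^d\to\mathbb{R}\cup\{+\infty\}$ is $(s,\sigma)$-uniformly convex w.r.t. $\|\cdot\|$ ($s\ge2$, $\sigma>0$) if $\varphi(y)\ge\varphi(x)+\langle\zeta,y-x\rangle+\frac{\sigma}{s}\|y-x\|^s$ for all $y$, all $x$ with $\partial\varphi(x)\ne\emptyset$ and all $\zeta\in\partial\varphi(x)$. $f=g+l$ with $g:\mathbb{R}^d\to\mathbb{R}$ convex and differentiable and $l:\mathbb{R}^d\to\mathbb{R}\cup\{+\infty\}$ proper, closed, convex. $\hat f(x;y):=g(y)+\langle\nabla g(y),x-y\rangle+l(x)$. Fix $q\ge2$, $\gamma>0$, $x_0\in\mathrm{dom}\,l$, and $h(\cdot;x_0):\mathbb{R}^d\to\mathbb{R}$ convex with $h(x;x_0)\ge0$, $h(x;x_0)=0$ iff $x=x_0$, and $h(\cdot;x_0)$ $(q,\gamma)$-uniformly convex w.r.t. $\|\cdot\|$.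 Let $a_1,a_2,\dots>0$, $A_0:=0$, $A_i:=A_{i-1}+a_i$. Set $\psi_0:=h(\cdot;x_0)$, $\psi_k(x):=\sum_{i=1}^ka_i\hat f(x;x_i)+h(x;x_0)$, $z_0:=x_0$, and for $k\ge1$ let $z_k$ be the unique minimizer of $\psi_k$. *)

theory Defs
  imports "HOL-Analysis.Analysis"
begin

definition is_norm :: "('a::euclidean_space \<Rightarrow> real) \<Rightarrow> bool" where
  "is_norm N \<longleftrightarrow> (\<forall>x. 0 \<le> N x) \<and> (\<forall>x. N x = 0 \<longleftrightarrow> x = 0)
     \<and> (\<forall>c x. N (c *\<^sub>R x) = \<bar>c\<bar> * N x) \<and> (\<forall>x y. N (x + y) \<le> N x + N y)"

definition proper_fun :: "('a \<Rightarrow> ereal) \<Rightarrow> bool" where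
  "proper_fun \<phi> \<longleftrightarrow> (\<forall>x. \<phi> x \<noteq> -\<infinity>) \<and> (\<exists>x. \<phi> x \<noteq> \<infinity>)"

definition convex_ext :: "('a::real_vector \<Rightarrow> ereal) \<Rightarrow> bool" where
  "convex_ext \<phi> \<longleftrightarrow> (\<forall>x y t. 0 \<le> t \<and> t \<le> 1 \<longrightarrow>
     \<phi> ((1 - t) *\<^sub>R x + t *\<^sub>R y) \<le> ereal (1 - t) * \<phi> x + ereal t * \<phi> y)"

definition closed_fun :: "('a::topological_space \<Rightarrow> ereal) \<Rightarrow> bool" where
  "closed_fun \<phi> \<longleftrightarrow> closed {(x, t::real). \<phi> x \<le> ereal t}"

definition edom :: "('a \<Rightarrow> ereal) \<Rightarrow> 'a set" where
  "edom \<phi> = {x. \<phi> x < \<infinity>}"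

definition subdiff :: "('a::real_inner \<Rightarrow> ereal) \<Rightarrow> 'a \<Rightarrow> 'a set" where
  "subdiff \<phi> x = {\<zeta>. \<bar>\<phi> x\<bar> \<noteq> \<infinity> \<and> (\<forall>y. \<phi> x + ereal (\<zeta> \<bullet> (y - x)) \<le> \<phi> y)}"

definition unif_convex :: "real \<Rightarrow> real \<Rightarrow> ('a::real_inner \<Rightarrow> real) \<Rightarrow> ('a \<Rightarrow> ereal) \<Rightarrow> bool" where
  "unif_convex s \<sigma> N \<phi> \<longleftrightarrow> (\<forall>x y \<zeta>. \<zeta> \<in> subdiff \<phi> x \<longrightarrow>
     \<phi> x + ereal (\<zeta> \<bullet> (y - x)) + ereal (\<sigma> / s * N (y - x) powr s) \<le> \<phi> y)"

definition fhat :: "('a::real_inner \<Rightarrow> real) \<Rightarrow> ('a \<Rightarrow> 'a) \<Rightarrow> ('a \<Rightarrow> ereal) \<Rightarrow> 'a \<Rightarrow> 'a \<Rightarrow> ereal" where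
  "fhat g G l x y = ereal (g y + G y \<bullet> (x - y)) + l x"

definition psi :: "(nat \<Rightarrow> real) \<Rightarrow> ('a::real_inner \<Rightarrow> real) \<Rightarrow> ('a \<Rightarrow> 'a) \<Rightarrow> ('a \<Rightarrow> ereal)
    \<Rightarrow> ('a \<Rightarrow> real) \<Rightarrow> (nat \<Rightarrow> 'a) \<Rightarrow> nat \<Rightarrow> 'a \<Rightarrow> ereal" where
  "psi a g G l h x k v = (\<Sum>i=1..k. ereal (a i) * fhat g G l v (x i)) + ereal (h v)"

end

theory Submission
  imports Defs
begin

lemma grad_ineq:
  fixes g :: "'a::euclidean_space \<Rightarrow> real"
  assumes cv: "convex_on UNIV g" and gd: "\<And>y. (g has_derivative (\<lambda>v. G y \<bullet> v)) (at y)"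
  shows "g x + G x \<bullet> (y - x) \<le> g y"
proof -
  define \<phi> where "\<phi> t = g (x + t *\<^sub>R (y - x))" for t :: real
  have c: "convex_on UNIV \<phi>"
  proof (rule convex_onI)
    fix s t u :: real assume "0 < u" "u < 1"
    have "x + ((1 - u) * s + u * t) *\<^sub>R (y - x) = (1-u) *\<^sub>R (x + s *\<^sub>R (y - x)) + u *\<^sub>R (x + t *\<^sub>R (y - x))"
      by (simp add: algebra_simps)
    then show "\<phi> ((1 - u) *\<^sub>R s + u *\<^sub>R t) \<le> (1 - u) * \<phi> s + u * \<phi> t"
      unfolding \<phi>_def using convex_onD[OF cv, of u] \<open>0<u\<close> \<open>u<1\<close> by simp
  qed auto
  have d: "(\<phi> has_field_derivative (G x \<bullet> (y - x))) (at 0 within UNIV)"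
  proof -
    have "((\<lambda>t. x + t *\<^sub>R (y - x)) has_derivative (\<lambda>t. t *\<^sub>R (y - x))) (at 0)"
      by (auto intro!: derivative_eq_intros)
    from has_derivative_compose[OF this gd[of "x + 0 *\<^sub>R (y-x)"]]
    have "(\<phi> has_derivative (\<lambda>t. G x \<bullet> (t *\<^sub>R (y - x)))) (at 0)"
      unfolding \<phi>_def by (simp add: o_def)
    moreover have "(\<lambda>t. t * (G x \<bullet> (y - x))) = (*) (G x \<bullet> (y - x))" by (auto simp: mult.commute)
    ultimately show ?thesis unfolding has_field_derivative_def by simp
  qed
  have "\<phi> 1 - \<phi> 0 \<ge> (G x \<bullet> (y - x)) * (1 - 0)"
    by (rule convex_on_imp_above_tangent[OF c _ _ _ d]) auto
  then show ?thesis unfolding \<phi>_def by simp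
qed

lemma subgrad_exists:
  fixes h :: "'a::euclidean_space \<Rightarrow> real"
  assumes cv: "convex_on UNIV h"
  shows "\<exists>\<zeta>. \<forall>v. h w + \<zeta> \<bullet> (v - w) \<le> h v"
proof -
  define T where "T = {p :: 'a \<times> real. h (fst p) < snd p}"
  have cT: "convex T" unfolding T_def convex_def
  proof (clarsimp)
    fix a b :: 'a and s t u v :: real
    assume *: "h a < s" "h b < t" "0 \<le> u" "0 \<le> v" "u + v = 1"
    have "h (u *\<^sub>R a + v *\<^sub>R b) \<le> u * h a + v * h b"
      using cv * unfolding convex_on_def by auto
    moreover have "u * h a + v * h b < u * s + v * t"
    proof (cases "u = 0")
      case True then show ?thesis using * by auto
    next
      case False
      then have "u * h a < u * s" using * by (intro mult_strict_left_mono) auto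
      moreover have "v * h b \<le> v * t" using * by (intro mult_left_mono) auto
      ultimately show ?thesis by linarith
    qed
    ultimately show "h (u *\<^sub>R a + v *\<^sub>R b) < u * s + v * t"
      using \<open>h (u *\<^sub>R a + v *\<^sub>R b) \<le> u * h a + v * h b\<close> by linarith
  qed
  have ne: "T \<noteq> {}" unfolding T_def by (metis (mono_tags, lifting) empty_iff fst_conv less_add_one mem_Collect_eq snd_conv)
  have dj: "{(w, h w)} \<inter> T = {}" unfolding T_def by auto
  obtain p b where p: "p \<noteq> 0" and le1: "\<forall>x\<in>{(w, h w)}. p \<bullet> x \<le> b" and ge: "\<forall>x\<in>T. p \<bullet> x \<ge> b"
    using separating_hyperplane_sets[OF convex_singleton cT _ ne dj] by blast
  obtain a c where pac: "p = (a, c)" by (cases p)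
  have key: "a \<bullet> w + c * h w \<le> a \<bullet> v + c * s" if "h v < s" for v s
  proof -
    have "(v, s) \<in> T" using that unfolding T_def by auto
    then have "b \<le> a \<bullet> v + c * s" using ge pac by (auto simp: inner_Pair)
    moreover have "a \<bullet> w + c * h w \<le> b" using le1 pac by (auto simp: inner_Pair)
    ultimately show ?thesis by linarith
  qed
  have c0: "c \<ge> 0" using key[of w "h w + 1"] by (simp add: algebra_simps)
  have cn: "c \<noteq> 0"
  proof
    assume "c = 0"
    then have "a \<noteq> 0" using p pac by (auto simp: zero_prod_def)
    have "a \<bullet> w \<le> a \<bullet> (w - a)" using key[of "w - a" "h (w - a) + 1"] \<open>c = 0\<close> by simp
    then have "a \<bullet> a \<le> 0" by (simp add: inner_diff_right)
    then show False using \<open>a \<noteq> 0\<close> inner_gt_zero_iff[of a] by linarith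
  qed
  have cp: "c > 0" using c0 cn by simp
  show ?thesis
  proof (rule exI[of _ "- (1/c) *\<^sub>R a"], intro allI)
    fix v
    have "a \<bullet> w + c * h w \<le> a \<bullet> v + c * h v"
    proof (rule field_le_epsilon)
      fix e :: real assume "e > 0"
      have "a \<bullet> w + c * h w \<le> a \<bullet> v + c * (h v + e / c)" using key[of v "h v + e/c"] \<open>e>0\<close> cp by simp
      then show "a \<bullet> w + c * h w \<le> a \<bullet> v + c * h v + e" using cp by (simp add: algebra_simps)
    qed
    then have "c * (h w - (1/c) * (a \<bullet> (v - w))) \<le> c * h v" using cp by (simp add: algebra_simps inner_diff_right)
    then have "h w - (1/c) * (a \<bullet> (v - w)) \<le> h v" using cp by simp
    then show "h w + (- (1/c) *\<^sub>R a) \<bullet> (v - w) \<le> h v" by simp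
  qed
qed

lemma growth:
  fixes N :: "'a::euclidean_space \<Rightarrow> real" and \<Phi> h :: "'a \<Rightarrow> real"
  assumes N: "is_norm N" and q: "q \<ge> 2" and \<gamma>: "\<gamma> > 0"
    and hc: "convex_on UNIV h" and huc: "unif_convex q \<gamma> N (\<lambda>v. ereal (h v))"
    and mn: "\<And>t. 0 < t \<Longrightarrow> t < 1 \<Longrightarrow> \<Phi> z + h z \<le> \<Phi> (z + t *\<^sub>R (y - z)) + h (z + t *\<^sub>R (y - z))"
    and cx: "\<And>t. 0 < t \<Longrightarrow> t < 1 \<Longrightarrow> \<Phi> (z + t *\<^sub>R (y - z)) \<le> (1 - t) * \<Phi> z + t * \<Phi> y"
  shows "\<Phi> z + h z + \<gamma> / q * N (y - z) powr q \<le> \<Phi> y + h y"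
proof -
  define M where "M = N (y - z) powr q"
  have M0: "M \<ge> 0" unfolding M_def by simp
  have Nsc: "N (c *\<^sub>R v) = \<bar>c\<bar> * N v" for c v using N unfolding is_norm_def by blast
  have Nnn: "N v \<ge> 0" for v using N unfolding is_norm_def by blast
  have gq: "\<gamma> / q \<ge> 0" using q \<gamma> by simp
  have main: "\<Phi> z + h z + \<gamma> / q * ((1 - t) powr q * M) \<le> \<Phi> y + h y" if t: "0 < t" "t < 1" for t
  proof -
    define w where "w = z + t *\<^sub>R (y - z)"
    obtain \<zeta> where \<zeta>: "\<And>v. h w + \<zeta> \<bullet> (v - w) \<le> h v" using subgrad_exists[OF hc, of w] by blast
    have sd: "\<zeta> \<in> subdiff (\<lambda>v. ereal (h v)) w" unfolding subdiff_def using \<zeta> by simp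
    have uc: "h w + \<zeta> \<bullet> (v - w) + \<gamma> / q * N (v - w) powr q \<le> h v" for v
      using huc sd unfolding unif_convex_def by (metis plus_ereal.simps(1) ereal_less_eq(3))
    have zw: "z - w = (- t) *\<^sub>R (y - z)" unfolding w_def by (simp add: algebra_simps)
    have yw: "y - w = (1 - t) *\<^sub>R (y - z)" unfolding w_def by (simp add: algebra_simps)
    have Nz: "N (z - w) powr q = t powr q * M" unfolding zw Nsc M_def using t Nnn
      by (simp add: powr_mult)
    have Ny: "N (y - w) powr q = (1 - t) powr q * M" unfolding yw Nsc M_def using t Nnn
      by (simp add: powr_mult)
    have i1: "h w + \<zeta> \<bullet> (z - w) + \<gamma> / q * (t powr q * M) \<le> h z" using uc[of z] Nz by simp
    have i2: "h w + \<zeta> \<bullet> (y - w) + \<gamma> / q * ((1 - t) powr q * M) \<le> h y" using uc[of y] Ny by simp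
    have lin: "(1 - t) * (\<zeta> \<bullet> (z - w)) + t * (\<zeta> \<bullet> (y - w)) = 0"
      unfolding zw yw by (simp add: algebra_simps)
    have p1: "0 \<le> \<gamma> / q * (t powr q * M)" using gq M0 by (intro mult_nonneg_nonneg) auto
    have c1: "(1 - t) * (h w + \<zeta> \<bullet> (z - w) + \<gamma> / q * (t powr q * M)) \<le> (1 - t) * h z"
      using i1 t by (intro mult_left_mono) auto
    have c2: "t * (h w + \<zeta> \<bullet> (y - w) + \<gamma> / q * ((1 - t) powr q * M)) \<le> t * h y"
      using i2 t by (intro mult_left_mono) auto
    have c3: "0 \<le> (1 - t) * (\<gamma> / q * (t powr q * M))" using p1 t by (intro mult_nonneg_nonneg[OF _ p1]) auto
    have hw: "h w + t * (\<gamma> / q * ((1 - t) powr q * M)) \<le> (1 - t) * h z + t * h y"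
      using c1 c2 c3 lin by (simp add: algebra_simps)
    have "\<Phi> z + h z \<le> (1 - t) * \<Phi> z + t * \<Phi> y + h w"
      using mn[OF t] cx[OF t] unfolding w_def by linarith
    then have "t * (\<Phi> z + h z + \<gamma> / q * ((1 - t) powr q * M)) \<le> t * (\<Phi> y + h y)"
      using hw by (simp add: algebra_simps)
    then show ?thesis using t by simp
  qed
  have l1: "((\<lambda>t::real. 1 - t) \<longlongrightarrow> 1) (at_right 0)"
  proof -
    have "((\<lambda>t::real. 1 - t) \<longlongrightarrow> 1 - 0) (at_right 0)" by (intro tendsto_intros)
    then show ?thesis by simp
  qed
  have lim: "((\<lambda>t. \<Phi> z + h z + \<gamma> / q * ((1 - t) powr q * M)) \<longlongrightarrow> \<Phi> z + h z + \<gamma> / q * (1 powr q * M)) (at_right 0)"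
    by (intro tendsto_intros l1) auto
  have ev: "eventually (\<lambda>t. \<Phi> z + h z + \<gamma> / q * ((1 - t) powr q * M) \<le> \<Phi> y + h y) (at_right (0::real))"
    using eventually_at_right_real[of 0 1] by (rule eventually_mono) (use main in auto)
  have "\<Phi> z + h z + \<gamma> / q * (1 powr q * M) \<le> \<Phi> y + h y"
    by (rule tendsto_le[OF _ tendsto_const lim ev]) simp
  then show ?thesis unfolding M_def by simp
qed
theorem mainTheorem7:
  fixes N :: "'a::euclidean_space \<Rightarrow> real"
    and g :: "'a \<Rightarrow> real" and G :: "'a \<Rightarrow> 'a" and l :: "'a \<Rightarrow> ereal"
    and h :: "'a \<Rightarrow> real" and q \<gamma> :: real
    and a :: "nat \<Rightarrow> real" and A :: "nat \<Rightarrow> real"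
    and x z u :: "nat \<Rightarrow> 'a" and k :: nat
  assumes N: "is_norm N"
    and g_convex: "convex_on UNIV g"
    and g_grad: "\<And>y. (g has_derivative (\<lambda>v. G y \<bullet> v)) (at y)"
    and l_proper: "proper_fun l" and l_convex: "convex_ext l" and l_closed: "closed_fun l"
    and q: "q \<ge> 2" and \<gamma>: "\<gamma> > 0"
    and x0: "x 0 \<in> edom l"
    and h_convex: "convex_on UNIV h"
    and h_nonneg: "\<And>v. h v \<ge> 0"
    and h_zero: "\<And>v. h v = 0 \<longleftrightarrow> v = x 0"
    and h_uc: "unif_convex q \<gamma> N (\<lambda>v. ereal (h v))"
    and a_pos: "\<And>i. i \<ge> 1 \<Longrightarrow> a i > 0"
    and A_def: "\<And>j. A j = (\<Sum>i=1..j. a i)"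
    and z0: "z 0 = x 0"
    and z_min: "\<And>j v. 1 \<le> j \<Longrightarrow> j \<le> k \<Longrightarrow> psi a g G l h x j (z j) \<le> psi a g G l h x j v"
    and x_dom: "\<And>i. 1 \<le> i \<Longrightarrow> i \<le> k \<Longrightarrow> subdiff l (x i) \<noteq> {}"
    and u_sub: "\<And>i. 1 \<le> i \<Longrightarrow> i \<le> k \<Longrightarrow> u i - G (x i) \<in> subdiff l (x i)"
    and k: "k \<ge> 1"
  shows "ereal (A k) * (ereal (g (x k)) + l (x k)) - psi a g G l h x k (z k)
     \<le> ereal (\<Sum>i=1..k. A i * (u i \<bullet> (x i - (a i / A i) *\<^sub>R z i - (A (i - 1) / A i) *\<^sub>R x (i - 1)))
                          - \<gamma> / q * N (z i - z (i - 1)) powr q)"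
proof -
  define L where "L v = real_of_ereal (l v)" for v
  have lnm: "l v \<noteq> -\<infinity>" for v using l_proper unfolding proper_fun_def by blast
  have lfin: "l v = ereal (L v)" if "l v \<noteq> \<infinity>" for v
    using that lnm[of v] unfolding L_def by (cases "l v") auto
  have lx: "l (x i) = ereal (L (x i))" if ik: "1 \<le> i" "i \<le> k" for i
  proof -
    obtain \<zeta> where "\<zeta> \<in> subdiff l (x i)" using x_dom[OF ik] by blast
    then have "\<bar>l (x i)\<bar> \<noteq> \<infinity>" unfolding subdiff_def by simp
    then show ?thesis by (intro lfin) auto
  qed
  have lx0: "l (x 0) = ereal (L (x 0))" using x0 unfolding edom_def by (intro lfin) auto
  define \<Phi> where "\<Phi> j v = (\<Sum>i=1..j. a i * (g (x i) + G (x i) \<bullet> (v - x i) + L v))" for j v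
  have psi_eq: "psi a g G l h x j v = ereal (\<Phi> j v + h v)" if "l v = ereal (L v)" for j v
  proof -
    have "psi a g G l h x j v = (\<Sum>i=1..j. ereal (a i * (g (x i) + G (x i) \<bullet> (v - x i) + L v))) + ereal (h v)"
      unfolding psi_def fhat_def that by (intro arg_cong2[where f="(+)"] sum.cong) auto
    then show ?thesis unfolding \<Phi>_def by simp
  qed
  have psi_inf: "psi a g G l h x j v = \<infinity>" if "1 \<le> j" "l v = \<infinity>" for j v
  proof -
    have "(\<Sum>i=1..j. ereal (a i) * fhat g G l v (x i)) = \<infinity>"
      unfolding sum_Pinfty using that a_pos[of 1] unfolding fhat_def
      by (intro conjI bexI[of _ 1]) auto
    then show ?thesis unfolding psi_def by simp
  qed
  have lz: "l (z j) = ereal (L (z j))" if "j \<le> k" for j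
  proof (cases "j = 0")
    case True then show ?thesis using lx0 z0 by simp
  next
    case False
    then have j: "1 \<le> j" by simp
    have "psi a g G l h x j (z j) \<le> psi a g G l h x j (x j)" using z_min j that by blast
    also have "\<dots> = ereal (\<Phi> j (x j) + h (x j))" using psi_eq lx j that by blast
    finally have "l (z j) \<noteq> \<infinity>" using psi_inf[OF j, of "z j"] by auto
    then show ?thesis by (rule lfin)
  qed
  have A0: "A 0 = 0" using A_def by simp
  have AS: "A (Suc j) = A j + a (Suc j)" for j using A_def by simp
  have Apos: "A j > 0" if "j \<ge> 1" for j
    unfolding A_def using that a_pos by (intro sum_pos) auto
  have Ann: "A j \<ge> 0" for j using Apos[of j] A0 by (cases j) auto
  define E where "E i = A i * (u i \<bullet> (x i - (a i / A i) *\<^sub>R z i - (A (i - 1) / A i) *\<^sub>R x (i - 1)))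
                          - \<gamma> / q * N (z i - z (i - 1)) powr q" for i
  define D where "D j = A j * (g (x j) + L (x j)) - (\<Phi> j (z j) + h (z j))" for j
  have step: "D (Suc j) - D j \<le> E (Suc j)" if jk: "Suc j \<le> k" for j
  proof -
    define m where "m = Suc j"
    have m1: "1 \<le> m" "m \<le> k" using jk unfolding m_def by auto
    have mn: "\<Phi> j (z j) + h (z j) \<le> \<Phi> j (z j + t *\<^sub>R (z m - z j)) + h (z j + t *\<^sub>R (z m - z j))"
      and cx: "\<Phi> j (z j + t *\<^sub>R (z m - z j)) \<le> (1 - t) * \<Phi> j (z j) + t * \<Phi> j (z m)"
      if t: "0 < t" "t < 1" for t
    proof -
      define w where "w = z j + t *\<^sub>R (z m - z j)"
      have w': "w = (1 - t) *\<^sub>R z j + t *\<^sub>R z m" unfolding w_def by (simp add: algebra_simps)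
      have "l w \<le> ereal (1 - t) * l (z j) + ereal t * l (z m)"
        using l_convex t unfolding convex_ext_def w' by auto
      also have "\<dots> = ereal ((1 - t) * L (z j) + t * L (z m))"
        using lz[of j] lz[of m] m1 jk by simp
      finally have lw1: "l w \<le> ereal ((1 - t) * L (z j) + t * L (z m))" .
      then have lw: "l w = ereal (L w)" by (intro lfin) auto
      have Lw: "L w \<le> (1 - t) * L (z j) + t * L (z m)" using lw1 lw by simp
      show "\<Phi> j (z j) + h (z j) \<le> \<Phi> j w + h w"
      proof (cases "j = 0")
        case True
        then show ?thesis using z0 h_zero[of "x 0"] h_nonneg[of w] unfolding \<Phi>_def by simp
      next
        case False
        then have "psi a g G l h x j (z j) \<le> psi a g G l h x j w" using z_min jk by simp
        then show ?thesis using psi_eq[OF lw, of j] psi_eq[OF lz[of j], of j] jk by simp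
      qed
      have trm: "a i * (g (x i) + G (x i) \<bullet> (w - x i) + L w)
          \<le> (1 - t) * (a i * (g (x i) + G (x i) \<bullet> (z j - x i) + L (z j))) + t * (a i * (g (x i) + G (x i) \<bullet> (z m - x i) + L (z m)))"
        if "i \<in> {1..j}" for i
      proof -
        have ai: "a i \<ge> 0" using a_pos[of i] that by simp
        have "G (x i) \<bullet> (w - x i) = (1 - t) * (G (x i) \<bullet> (z j - x i)) + t * (G (x i) \<bullet> (z m - x i))"
          unfolding w' by (simp add: inner_diff_right inner_add_right algebra_simps)
        then have "g (x i) + G (x i) \<bullet> (w - x i) + L w \<le> (1 - t) * (g (x i) + G (x i) \<bullet> (z j - x i) + L (z j)) + t * (g (x i) + G (x i) \<bullet> (z m - x i) + L (z m))"
          using Lw by (simp add: algebra_simps)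
        then have "a i * (g (x i) + G (x i) \<bullet> (w - x i) + L w) \<le> a i * ((1 - t) * (g (x i) + G (x i) \<bullet> (z j - x i) + L (z j)) + t * (g (x i) + G (x i) \<bullet> (z m - x i) + L (z m)))"
          using ai by (rule mult_left_mono)
        then show ?thesis by (simp add: algebra_simps)
      qed
      have "\<Phi> j w \<le> (\<Sum>i=1..j. (1 - t) * (a i * (g (x i) + G (x i) \<bullet> (z j - x i) + L (z j))) + t * (a i * (g (x i) + G (x i) \<bullet> (z m - x i) + L (z m))))"
        unfolding \<Phi>_def by (rule sum_mono) (rule trm)
      also have "\<dots> = (1 - t) * \<Phi> j (z j) + t * \<Phi> j (z m)"
        unfolding \<Phi>_def by (simp add: sum.distrib sum_distrib_left)
      finally show "\<Phi> j w \<le> (1 - t) * \<Phi> j (z j) + t * \<Phi> j (z m)" .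
    qed
    have gr: "\<Phi> j (z j) + h (z j) + \<gamma> / q * N (z m - z j) powr q \<le> \<Phi> j (z m) + h (z m)"
      by (rule growth[OF N q \<gamma> h_convex h_uc mn cx])
    have Phim: "\<Phi> m (z m) = \<Phi> j (z m) + a m * (g (x m) + G (x m) \<bullet> (z m - x m) + L (z m))"
      unfolding \<Phi>_def m_def by simp
    have sub: "u m - G (x m) \<in> subdiff l (x m)" using u_sub m1 by blast
    have s1: "L (x m) + (u m - G (x m)) \<bullet> (z m - x m) \<le> L (z m)"
    proof -
      have "l (x m) + ereal ((u m - G (x m)) \<bullet> (z m - x m)) \<le> l (z m)" using sub unfolding subdiff_def by blast
      then show ?thesis using lx[OF m1] lz[OF m1(2)] by simp
    qed
    have s2: "A j * (g (x j) + L (x j)) \<ge> A j * (g (x m) + L (x m) + u m \<bullet> (x j - x m))"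
    proof (cases "j = 0")
      case True then show ?thesis using A0 by simp
    next
      case False
      have "l (x m) + ereal ((u m - G (x m)) \<bullet> (x j - x m)) \<le> l (x j)" using sub unfolding subdiff_def by blast
      then have "L (x m) + (u m - G (x m)) \<bullet> (x j - x m) \<le> L (x j)" using lx[OF m1] lx[of j] False jk by simp
      moreover have "g (x m) + G (x m) \<bullet> (x j - x m) \<le> g (x j)" by (rule grad_ineq[OF g_convex g_grad])
      ultimately have "g (x m) + L (x m) + u m \<bullet> (x j - x m) \<le> g (x j) + L (x j)"
        by (simp add: inner_diff_left)
      then show ?thesis using Ann[of j] by (rule mult_left_mono)
    qed
    have Am: "A m = A j + a m" "A m > 0" using AS[of j] Apos[OF m1(1)] unfolding m_def by auto
    have Em: "E m = u m \<bullet> x m * A m - a m * (u m \<bullet> z m) - A j * (u m \<bullet> x j) - \<gamma> / q * N (z m - z j) powr q"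
      unfolding E_def m_def using Am(2) unfolding m_def by (simp add: inner_diff_right algebra_simps)
    have e1: "u m \<bullet> (z m - x m) = u m \<bullet> z m - u m \<bullet> x m" "u m \<bullet> (x j - x m) = u m \<bullet> x j - u m \<bullet> x m"
      "(u m - G (x m)) \<bullet> (z m - x m) = u m \<bullet> (z m - x m) - G (x m) \<bullet> (z m - x m)"
      by (simp_all add: inner_diff_right inner_diff_left)
    have am: "a m > 0" using a_pos m1(1) by simp
    have s1': "a m * L (x m) + a m * (u m \<bullet> z m) - a m * (u m \<bullet> x m) - a m * (G (x m) \<bullet> (z m - x m)) \<le> a m * L (z m)"
    proof -
      have "a m * (L (x m) + (u m - G (x m)) \<bullet> (z m - x m)) \<le> a m * L (z m)"
        using s1 am by (intro mult_left_mono) auto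
      then show ?thesis using e1 by (simp add: algebra_simps)
    qed
    have s2': "A j * g (x m) + A j * L (x m) + A j * (u m \<bullet> x j) - A j * (u m \<bullet> x m) \<le> A j * g (x j) + A j * L (x j)"
      using s2 e1 by (simp add: algebra_simps)
    have eq1: "D m = A j * g (x m) + a m * g (x m) + A j * L (x m) + a m * L (x m) - \<Phi> j (z m)
       - a m * g (x m) - a m * (G (x m) \<bullet> (z m - x m)) - a m * L (z m) - h (z m)"
      unfolding D_def Phim Am(1) by (simp add: algebra_simps)
    have eq2: "D j = A j * g (x j) + A j * L (x j) - \<Phi> j (z j) - h (z j)"
      unfolding D_def by (simp add: algebra_simps)
    have eq3: "u m \<bullet> x m * A m = A j * (u m \<bullet> x m) + a m * (u m \<bullet> x m)"
      unfolding Am(1) by (simp add: algebra_simps)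
    have "D m - D j \<le> E m"
      unfolding Em eq1 eq2 eq3 using gr s1' s2' by linarith
    then show ?thesis unfolding m_def .
  qed
  have D0: "D 0 = 0" unfolding D_def \<Phi>_def using A0 z0 h_zero[of "x 0"] by simp
  have ind: "j \<le> k \<longrightarrow> D j \<le> (\<Sum>i=1..j. E i)" for j
  proof (induction j)
    case 0 then show ?case using D0 by simp
  next
    case (Suc j)
    then show ?case using step[of j] by (auto simp del: sum.cl_ivl_Suc simp add: sum.cl_ivl_Suc)
  qed
  have "ereal (A k) * (ereal (g (x k)) + l (x k)) - psi a g G l h x k (z k) = ereal (D k)"
    unfolding D_def using lx[OF k order.refl] psi_eq[OF lz[OF order.refl]] by simp
  also have "\<dots> \<le> ereal (\<Sum>i=1..k. E i)" using ind[of k] by simp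
  finally show ?thesis unfolding E_def .
qed

end
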